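(* Consider a slotted system with diversity. There are $N$ users, $N_{sub}\ge2$ sub-carriers and slots $1,\dots,T$. In every slot, independently, the BS chooses a user uniformly at random among the $N$ users and a sub-carrier uniformly at random among the $N_{sub}$ sub-carriers, and sends an update to the chosen user on the chosen sub-carrier. The adversary uses a blocking matrix $\sigma\in\{0,1\}^{N_{sub}\times T}$, where $\sigma_j(t)=0$ means sub-carrier $j$ is blocked in slot $t$. Feasibility means $\sum_{j,t}(1-\sigma_j(t))\le\alpha T$ and at most one sub-carrier is blocked per slot, where $0<\alpha<1$ and $\alpha T\in\mathbb Z$. Ages satisfy $a_i(1)=1$. Also $a_i(t+1)=1$ if user $i$ is chosen in slot $t$ and the chosen sub-carrier is not blocked in slot $t$, and $a_i(t+1)=a_i(t)+1$ otherwise. The average age is $\Delta^{\sigma}=\frac1T\sum_{t=1}^T\frac1N\sum_i\mathbb E[a_i(t)]$. Then there exists a maximizer of $\Delta^\sigma$ over feasible $\sigma$ that blocks a single sub-carrier in exactly $\alpha T$ consecutive slots and blocks nothing else. *)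

theory Defs
  imports Complex_Main "HOL-Library.FuncSet"
begin

text \<open>Users are 0..<N, sub-carriers 0..<Nsub, slots 1..T.
  A blocking pattern is bl :: nat => nat => bool, with  bl j t  meaning
  sub-carrier j is blocked in slot t (i.e. sigma_j(t) = 0).
  A sample outcome w maps each slot t to the pair (user chosen, sub-carrier chosen).\<close>

fun age :: "(nat \<Rightarrow> nat \<Rightarrow> bool) \<Rightarrow> (nat \<Rightarrow> nat \<times> nat) \<Rightarrow> nat \<Rightarrow> nat \<Rightarrow> nat" where
  "age bl w i 0 = 1"
| "age bl w i (Suc 0) = 1"
| "age bl w i (Suc (Suc t)) =
     (if fst (w (Suc t)) = i \<and> \<not> bl (snd (w (Suc t))) (Suc t) then 1
      else age bl w i (Suc t) + 1)"

text \<open>Sample space: independent uniform choice of (user, sub-carrier) in each slot,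
  i.e. the uniform distribution on all such assignments.\<close>
definition outcomes :: "nat \<Rightarrow> nat \<Rightarrow> nat \<Rightarrow> (nat \<Rightarrow> nat \<times> nat) set" where
  "outcomes N Nsub T = {1..T} \<rightarrow>\<^sub>E ({0..<N} \<times> {0..<Nsub})"

definition expected_age :: "nat \<Rightarrow> nat \<Rightarrow> nat \<Rightarrow> (nat \<Rightarrow> nat \<Rightarrow> bool) \<Rightarrow> nat \<Rightarrow> nat \<Rightarrow> real" where
  "expected_age N Nsub T bl i t =
     (\<Sum>w\<in>outcomes N Nsub T. real (age bl w i t)) / real (card (outcomes N Nsub T))"

definition avg_age :: "nat \<Rightarrow> nat \<Rightarrow> nat \<Rightarrow> (nat \<Rightarrow> nat \<Rightarrow> bool) \<Rightarrow> real" where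
  "avg_age N Nsub T bl =
     (1 / real T) * (\<Sum>t=1..T. (1 / real N) * (\<Sum>i<N. expected_age N Nsub T bl i t))"

definition feasible :: "nat \<Rightarrow> nat \<Rightarrow> real \<Rightarrow> (nat \<Rightarrow> nat \<Rightarrow> bool) \<Rightarrow> bool" where
  "feasible Nsub T \<alpha> bl \<longleftrightarrow>
     real (card {(j, t). j < Nsub \<and> t \<in> {1..T} \<and> bl j t}) \<le> \<alpha> * real T \<and>
     (\<forall>t\<in>{1..T}. card {j. j < Nsub \<and> bl j t} \<le> 1)"

end

theory Submission
  imports Defs
begin


fun LL :: "real list \<Rightarrow> real" where
  "LL [] = 1" | "LL (c#w) = 1 + c * LL w"
fun PP :: "real list \<Rightarrow> real" where
  "PP [] = 1" | "PP (c#w) = c * PP w"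
fun RR :: "real list \<Rightarrow> real" where
  "RR [] = 1" | "RR (c#w) = RR w + c * PP w"
fun FF :: "real list \<Rightarrow> real" where
  "FF [] = 0" | "FF (c#w) = FF w + c * LL w"

lemma PP_app: "PP (u@v) = PP u * PP v"
  by (induction u) auto
lemma LL_app: "LL (u@v) = LL u + PP u * (LL v - 1)"
proof (induction u)
  case (Cons c u)
  have "LL ((c#u)@v) = 1 + c * (LL u + PP u * (LL v - 1))" using Cons by simp
  then show ?case by (simp add: algebra_simps)
qed simp
lemma RR_app: "RR (u@v) = RR v + PP v * (RR u - 1)"
proof (induction u)
  case (Cons c u)
  have "RR ((c#u)@v) = RR v + PP v * (RR u - 1) + c * (PP u * PP v)" using Cons by (simp add: PP_app)
  then show ?case by (simp add: algebra_simps)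
qed simp
lemma FF_app: "FF (u@v) = FF u + FF v + (RR u - 1) * (LL v - 1)"
proof (induction u)
  case (Cons c u)
  have "FF ((c#u)@v) = FF u + FF v + (RR u - 1) * (LL v - 1) + c * (LL u + PP u * (LL v - 1))"
    using Cons by (simp add: LL_app)
  then show ?case by (simp add: algebra_simps)
qed simp

lemma rev_all: "LL (rev w) = RR w \<and> RR (rev w) = LL w \<and> PP (rev w) = PP w \<and> FF (rev w) = FF w"
  by (induction w) (auto simp: LL_app RR_app PP_app FF_app algebra_simps)

lemma LL_nonneg: "\<forall>c\<in>set w. 0 \<le> c \<Longrightarrow> 1 \<le> LL w"
  by (induction w) auto

fun GG :: "real \<Rightarrow> nat \<Rightarrow> real" where
  "GG x 0 = 0" | "GG x (Suc n) = x * (1 + GG x n)"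

lemma GG_nonneg: "0 \<le> x \<Longrightarrow> 0 \<le> GG x n"
  by (induction n) auto

lemma GG_mono: "0 \<le> x \<Longrightarrow> GG x n \<le> GG x (Suc n)"
proof (induction n)
  case 0 then show ?case by simp
next
  case (Suc n)
  then show ?case by (simp add: mult_left_mono)
qed

lemma LL_GG: "0 \<le> x \<Longrightarrow> \<forall>c\<in>set w. x \<le> c \<Longrightarrow> GG x (length w) \<le> LL w - 1"
proof (induction w)
  case Nil then show ?case by simp
next
  case (Cons c w)
  have "1 \<le> LL w" using Cons.prems by (intro LL_nonneg) auto
  have "x * (1 + GG x (length w)) \<le> c * LL w"
    using Cons by (intro mult_mono) (auto simp: GG_nonneg)
  then show ?case by simp
qed

lemma RR_GG: "0 \<le> x \<Longrightarrow> \<forall>c\<in>set w. x \<le> c \<Longrightarrow> GG x (length w) \<le> RR w - 1"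
  using LL_GG[of x "rev w"] rev_all[of w] by simp

definition phi :: "real \<Rightarrow> real list \<Rightarrow> real" where
  "phi x w = (1 - x) * (RR w - 1) - x * (1 - PP w)"

lemma inv_main: "0 \<le> x \<Longrightarrow> \<forall>c\<in>set w. x \<le> c \<Longrightarrow>
   0 \<le> phi x w \<and> x * (RR w - 1 - GG x (length w)) \<le> GG x (length w) * phi x w"
proof (induction w rule: rev_induct)
  case Nil then show ?case by (simp add: phi_def)
next
  case (snoc c w)
  have IH: "0 \<le> phi x w" "x * (RR w - 1 - GG x (length w)) \<le> GG x (length w) * phi x w"
    using snoc by auto
  have cx: "x \<le> c" using snoc.prems by auto
  have phi': "phi x (w @ [c]) = c * phi x w + (c - x)"
    by (simp add: phi_def RR_app PP_app algebra_simps)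
  have RR': "RR (w @ [c]) - 1 - GG x (length (w@[c])) = c * (RR w - 1 - GG x (length w)) + (c - x) * (1 + GG x (length w))"
    by (simp add: RR_app algebra_simps)
  define G where "G = GG x (length w)"
  define G' where "G' = GG x (length (w@[c]))"
  have G': "G' = x * (1 + G)" by (simp add: G_def G'_def)
  have GG': "G \<le> G'" using GG_mono[OF snoc.prems(1), of "length w"] by (simp add: G_def G'_def)
  have G0: "0 \<le> G" using GG_nonneg snoc.prems(1) G_def by auto
  have "x * (RR (w @ [c]) - 1 - G') = c * (x * (RR w - 1 - G)) + (c - x) * G'"
    using RR' by (simp add: G_def G'_def G' algebra_simps)
  also have "\<dots> \<le> c * (G * phi x w) + (c - x) * G'"
    using IH(2) cx snoc.prems(1) by (simp add: G_def mult_left_mono)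
  also have "\<dots> \<le> c * (G' * phi x w) + (c - x) * G'"
    using GG' IH(1) cx snoc.prems(1) by (simp add: mult_left_mono mult_right_mono)
  also have "\<dots> = G' * phi x (w @ [c])" by (simp add: phi' algebra_simps)
  finally show ?case using phi' IH(1) cx snoc.prems(1) by (simp add: G'_def)
qed

lemma L2: "0 \<le> x \<Longrightarrow> \<forall>c\<in>set w. x \<le> c \<Longrightarrow> x * (RR w - LL w) \<le> (RR w - 1) * phi x w"
proof -
  assume x0: "0 \<le> x" and w: "\<forall>c\<in>set w. x \<le> c"
  note I = inv_main[OF x0 w]
  have a: "GG x (length w) \<le> RR w - 1" by (rule RR_GG[OF x0 w])
  have b: "GG x (length w) \<le> LL w - 1" by (rule LL_GG[OF x0 w])
  have "x * (RR w - LL w) \<le> x * (RR w - 1 - GG x (length w))"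
    using b x0 by (simp add: mult_left_mono)
  also have "\<dots> \<le> GG x (length w) * phi x w" using I by simp
  also have "\<dots> \<le> (RR w - 1) * phi x w" using a I by (simp add: mult_right_mono)
  finally show ?thesis .
qed

lemma gapA: assumes x0: "0 \<le> x" and a: "\<forall>c\<in>set \<alpha>. x \<le> c" and b: "\<forall>c\<in>set \<beta>. x \<le> c"
  and le: "RR \<alpha> \<le> LL \<beta>"
  shows "FF (\<alpha> @ x # \<beta>) \<le> FF (x # \<alpha> @ \<beta>)"
proof -
  have e: "FF (x # \<alpha> @ \<beta>) - FF (\<alpha> @ x # \<beta>) = (LL \<beta> - 1) * phi x \<alpha> - x * (RR \<alpha> - LL \<alpha>)"
    by (simp add: FF_app LL_app phi_def algebra_simps)
  have p: "0 \<le> phi x \<alpha>" using inv_main[OF x0 a] by simp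
  have r: "0 \<le> RR \<alpha> - 1" using RR_GG[OF x0 a] GG_nonneg[OF x0, of "length \<alpha>"] by simp
  have "x * (RR \<alpha> - LL \<alpha>) \<le> (RR \<alpha> - 1) * phi x \<alpha>" by (rule L2[OF x0 a])
  also have "\<dots> \<le> (LL \<beta> - 1) * phi x \<alpha>" using le p by (simp add: mult_right_mono)
  finally show ?thesis using e by simp
qed

lemma gapB: assumes x0: "0 \<le> x" and a: "\<forall>c\<in>set \<alpha>. x \<le> c" and b: "\<forall>c\<in>set \<beta>. x \<le> c"
  shows "FF (\<alpha> @ x # \<beta>) \<le> max (FF (x # \<alpha> @ \<beta>)) (FF (\<alpha> @ \<beta> @ [x]))"
proof (cases "RR \<alpha> \<le> LL \<beta>")
  case True
  then show ?thesis using gapA[OF x0 a b] by simp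
next
  case False
  have "FF (rev \<beta> @ x # rev \<alpha>) \<le> FF (x # rev \<beta> @ rev \<alpha>)"
    using False by (intro gapA[OF x0]) (auto simp: rev_all b a)
  moreover have "FF (rev \<beta> @ x # rev \<alpha>) = FF (\<alpha> @ x # \<beta>)"
    using rev_all[of "\<alpha> @ x # \<beta>"] by simp
  moreover have "FF (x # rev \<beta> @ rev \<alpha>) = FF (\<alpha> @ \<beta> @ [x])"
    using rev_all[of "\<alpha> @ \<beta> @ [x]"] by simp
  ultimately show ?thesis by simp
qed



definition vals :: "real \<Rightarrow> real \<Rightarrow> bool list \<Rightarrow> real list" where
  "vals x y bs = map (\<lambda>b. if b then y else x) bs"

definition blk :: "nat \<Rightarrow> nat \<Rightarrow> nat \<Rightarrow> bool list" where
  "blk n a m = map (\<lambda>i. a \<le> i \<and> i < a + m) [0..<n]"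

definition tr :: "bool list \<Rightarrow> bool list" where
  "tr bs = rev (dropWhile Not (rev (dropWhile Not bs)))"

definition mu :: "bool list \<Rightarrow> nat" where
  "mu bs = length (tr bs) - length (filter id bs)"

lemma filter_dropWhile_Not: "filter id (dropWhile Not bs) = filter id bs"
  by (induction bs) auto

lemma filter_tr: "filter id (tr bs) = filter id bs"
  unfolding tr_def by (simp add: rev_filter[symmetric] filter_dropWhile_Not)

lemma decomp: "bs = replicate (length (takeWhile Not bs)) False @ tr bs @
     replicate (length (takeWhile Not (rev (dropWhile Not bs)))) False"
proof -
  have t1: "takeWhile Not bs = replicate (length (takeWhile Not bs)) False"
    by (rule replicate_eqI) (auto dest: set_takeWhileD)
  define d where "d = dropWhile Not bs"
  have t2: "takeWhile Not (rev d) = replicate (length (takeWhile Not (rev d))) False"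
    by (rule replicate_eqI) (auto dest: set_takeWhileD)
  have "rev d = takeWhile Not (rev d) @ dropWhile Not (rev d)" by simp
  then have "d = rev (dropWhile Not (rev d)) @ rev (takeWhile Not (rev d))"
    by (metis rev_append rev_rev_ident)
  then have "d = tr bs @ replicate (length (takeWhile Not (rev d))) False"
    using t2 by (metis d_def rev_replicate tr_def)
  moreover have "bs = takeWhile Not bs @ d" by (simp add: d_def)
  ultimately show ?thesis using t1 d_def by (metis append_assoc)
qed

lemma tr_hd: "tr bs \<noteq> [] \<Longrightarrow> hd (tr bs) = True"
proof -
  assume ne: "tr bs \<noteq> []"
  define d where "d = dropWhile Not bs"
  have "d = tr bs @ replicate (length (takeWhile Not (rev d))) False"
  proof -
    have "rev d = takeWhile Not (rev d) @ dropWhile Not (rev d)" by simp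
    then have "d = rev (dropWhile Not (rev d)) @ rev (takeWhile Not (rev d))"
      by (metis rev_append rev_rev_ident)
    moreover have "takeWhile Not (rev d) = replicate (length (takeWhile Not (rev d))) False"
      by (rule replicate_eqI) (auto dest: set_takeWhileD)
    ultimately show ?thesis by (metis d_def rev_replicate tr_def)
  qed
  then obtain k where dk: "d = tr bs @ replicate k False" by blast
  have "d \<noteq> []" "hd d = hd (tr bs)" using ne by (simp_all add: dk)
  moreover have "d \<noteq> [] \<Longrightarrow> hd d" unfolding d_def using hd_dropWhile[of Not bs] by simp
  ultimately show ?thesis by simp
qed

lemma tr_last: "tr bs \<noteq> [] \<Longrightarrow> last (tr bs) = True"
proof -
  assume ne: "tr bs \<noteq> []"
  define e where "e = dropWhile Not (rev (dropWhile Not bs))"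
  have "tr bs = rev e" by (simp add: tr_def e_def)
  then have "e \<noteq> []" "last (tr bs) = hd e" using ne by (auto simp: last_rev)
  moreover have "e \<noteq> [] \<Longrightarrow> hd e" unfolding e_def using hd_dropWhile[of Not "rev (dropWhile Not bs)"] by simp
  ultimately show ?thesis by simp
qed

lemma mu_zero: "mu bs = 0 \<Longrightarrow> \<exists>a m b. bs = replicate a False @ replicate m True @ replicate b False"
proof -
  assume "mu bs = 0"
  then have le: "length (tr bs) \<le> length (filter id (tr bs))" by (simp add: mu_def filter_tr)
  have all: "\<forall>x\<in>set (tr bs). x"
  proof (rule ccontr)
    assume "\<not> (\<forall>x\<in>set (tr bs). x)"
    then obtain z where "z \<in> set (tr bs)" "\<not> id z" by auto
    then have "length (filter id (tr bs)) < length (tr bs)" by (rule length_filter_less)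
    then show False using le by simp
  qed
  have "tr bs = replicate (length (tr bs)) True" by (rule replicate_eqI) (use all in auto)
  then obtain n where n: "tr bs = replicate n True" by blast
  have "bs = replicate (length (takeWhile Not bs)) False @ replicate n True @
     replicate (length (takeWhile Not (rev (dropWhile Not bs)))) False"
    using decomp[of bs] n by simp
  then show ?thesis by blast
qed

lemma mu_pos: assumes "mu bs \<noteq> 0"
  shows "\<exists>\<alpha> \<beta>. bs = \<alpha> @ False # \<beta> \<and> True \<in> set \<alpha> \<and> True \<in> set \<beta>"
proof -
  have lt: "length (filter id (tr bs)) < length (tr bs)" using assms by (simp add: mu_def filter_tr)
  have "False \<in> set (tr bs)"
  proof (rule ccontr)
    assume "False \<notin> set (tr bs)"
    then have "\<forall>x\<in>set (tr bs). id x" by (metis (full_types) id_apply)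
    then have "filter id (tr bs) = tr bs" by (rule filter_True)
    then show False using lt by simp
  qed
  then obtain t1 t2 where t: "tr bs = t1 @ False # t2" by (meson split_list)
  have ne: "tr bs \<noteq> []" using t by simp
  have t1ne: "t1 \<noteq> []" using tr_hd[OF ne] t by auto
  then have "hd t1 = True" using tr_hd[OF ne] t by simp
  then have h1: "True \<in> set t1" using t1ne hd_in_set by metis
  have t2ne: "t2 \<noteq> []" using tr_last[OF ne] t by auto
  then have "last t2 = True" using tr_last[OF ne] t by simp
  then have h2: "True \<in> set t2" using t2ne last_in_set by metis
  have "bs = (replicate (length (takeWhile Not bs)) False @ t1) @ False # (t2 @
     replicate (length (takeWhile Not (rev (dropWhile Not bs)))) False)"
    using decomp[of bs] t by simp
  then show ?thesis using h1 h2 by fastforce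
qed

lemma tr_mid: assumes "True \<in> set \<alpha>" "True \<in> set \<beta>"
  shows "length (tr (\<alpha> @ False # \<beta>)) = Suc (length (tr (False # \<alpha> @ \<beta>)))"
    "length (tr (\<alpha> @ \<beta> @ [False])) = length (tr (False # \<alpha> @ \<beta>))"
proof -
  have d1: "dropWhile Not (\<alpha> @ X) = dropWhile Not \<alpha> @ X" for X
    using assms(1) by (simp add: dropWhile_append1)
  have d2: "dropWhile Not (rev \<beta> @ X) = dropWhile Not (rev \<beta>) @ X" for X
    using assms(2) by (simp add: dropWhile_append1)
  show "length (tr (\<alpha> @ False # \<beta>)) = Suc (length (tr (False # \<alpha> @ \<beta>)))"
    unfolding tr_def using d1 d2 by simp
  show "length (tr (\<alpha> @ \<beta> @ [False])) = length (tr (False # \<alpha> @ \<beta>))"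
    unfolding tr_def using d1 d2 by simp
qed

lemma blk_rep: "replicate a False @ replicate m True @ replicate b False = blk (a + m + b) a m"
  unfolding blk_def by (rule nth_equalityI) (auto simp: nth_append)

lemma length_blk[simp]: "length (blk n a m) = n" by (simp add: blk_def)

lemma vals_ge: "x \<le> y \<Longrightarrow> \<forall>c\<in>set (vals x y bs). x \<le> c"
  by (auto simp: vals_def)

lemma lemmaB: assumes x0: "0 \<le> x" and xy: "x \<le> y"
  shows "\<exists>a. a + length (filter id bs) \<le> length bs \<and>
     FF (vals x y bs) \<le> FF (vals x y (blk (length bs) a (length (filter id bs))))"
proof (induction "mu bs" arbitrary: bs rule: less_induct)
  case less
  show ?case
  proof (cases "mu bs = 0")
    case True
    then obtain a m b where bs: "bs = replicate a False @ replicate m True @ replicate b False"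
      using mu_zero by blast
    have "length (filter id bs) = m" by (simp add: bs)
    then show ?thesis by (intro exI[of _ a]) (simp add: bs blk_rep)
  next
    case False
    then obtain \<alpha> \<beta> where bs: "bs = \<alpha> @ False # \<beta>" and h: "True \<in> set \<alpha>" "True \<in> set \<beta>"
      using mu_pos by blast
    have f1: "filter id (False # \<alpha> @ \<beta>) = filter id bs" "filter id (\<alpha> @ \<beta> @ [False]) = filter id bs"
      by (auto simp: bs)
    have l1: "length (False # \<alpha> @ \<beta>) = length bs" "length (\<alpha> @ \<beta> @ [False]) = length bs"
      by (auto simp: bs)
    have fl: "length (filter id bs) \<le> length (tr (False # \<alpha> @ \<beta>))"
      using length_filter_le[of id "tr (False # \<alpha> @ \<beta>)"] filter_tr[of "False # \<alpha> @ \<beta>"] f1 by (metis length_filter_le)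
    have m1: "mu (False # \<alpha> @ \<beta>) < mu bs" "mu (\<alpha> @ \<beta> @ [False]) < mu bs"
      using tr_mid[OF h] f1 fl unfolding mu_def bs by simp_all
    have g: "FF (vals x y bs) \<le> max (FF (vals x y (False # \<alpha> @ \<beta>))) (FF (vals x y (\<alpha> @ \<beta> @ [False])))"
      using gapB[OF x0 vals_ge[OF xy, of \<alpha>] vals_ge[OF xy, of \<beta>]] by (simp add: bs vals_def)
    show ?thesis
    proof (cases "FF (vals x y (False # \<alpha> @ \<beta>)) \<le> FF (vals x y (\<alpha> @ \<beta> @ [False]))")
      case True
      obtain a where ha: "a + length (filter id (\<alpha> @ \<beta> @ [False])) \<le> length (\<alpha> @ \<beta> @ [False])"
        "FF (vals x y (\<alpha> @ \<beta> @ [False])) \<le> FF (vals x y (blk (length (\<alpha> @ \<beta> @ [False])) a (length (filter id (\<alpha> @ \<beta> @ [False])))))"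
        using less(1)[OF m1(2)] by blast
      have "FF (vals x y bs) \<le> FF (vals x y (\<alpha> @ \<beta> @ [False]))" using g True by (simp add: max_def)
      then show ?thesis using ha f1 l1 by (metis order_trans)
    next
      case False
      obtain a where ha: "a + length (filter id (False # \<alpha> @ \<beta>)) \<le> length (False # \<alpha> @ \<beta>)"
        "FF (vals x y (False # \<alpha> @ \<beta>)) \<le> FF (vals x y (blk (length (False # \<alpha> @ \<beta>)) a (length (filter id (False # \<alpha> @ \<beta>)))))"
        using less(1)[OF m1(1)] by blast
      have "FF (vals x y bs) \<le> FF (vals x y (False # \<alpha> @ \<beta>))" using g False by (simp add: max_def)
      then show ?thesis using ha f1 l1 by (metis order_trans)
    qed
  qed
qed



definition Eg :: "(nat \<Rightarrow> real) \<Rightarrow> nat \<Rightarrow> real" where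
  "Eg z t = (\<Sum>k<t. \<Prod>s\<in>{t-k..<t}. z s)"

lemma Eg_one: "Eg z (Suc 0) = 1"
  by (simp add: Eg_def)

lemma Eg_rec: "Eg z (Suc (Suc t)) = 1 + z (Suc t) * Eg z (Suc t)"
proof -
  have "Eg z (Suc (Suc t)) = (\<Prod>s\<in>{Suc (Suc t)..<Suc (Suc t)}. z s) +
      (\<Sum>k<Suc t. \<Prod>s\<in>{Suc (Suc t) - Suc k..<Suc (Suc t)}. z s)"
    unfolding Eg_def by (subst sum.lessThan_Suc_shift) simp
  also have "(\<Sum>k<Suc t. \<Prod>s\<in>{Suc (Suc t) - Suc k..<Suc (Suc t)}. z s) =
      (\<Sum>k<Suc t. z (Suc t) * (\<Prod>s\<in>{Suc t - k..<Suc t}. z s))"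
  proof (rule sum.cong)
    fix k assume "k \<in> {..<Suc t}"
    then have "Suc t - k \<le> Suc t" by simp
    then have "(\<Prod>s\<in>{Suc t - k..<Suc (Suc t)}. z s) = (\<Prod>s\<in>{Suc t - k..<Suc t}. z s) * z (Suc t)"
      by (rule prod.atLeastLessThan_Suc)
    then show "(\<Prod>s\<in>{Suc (Suc t) - Suc k..<Suc (Suc t)}. z s) = z (Suc t) * (\<Prod>s\<in>{Suc t - k..<Suc t}. z s)"
      by simp
  qed simp
  finally have e: "Eg z (Suc (Suc t)) = (\<Prod>s\<in>{Suc (Suc t)..<Suc (Suc t)}. z s) +
      (\<Sum>k<Suc t. z (Suc t) * (\<Prod>s\<in>{Suc t - k..<Suc t}. z s))" .
  have "(\<Prod>s\<in>{Suc (Suc t)..<Suc (Suc t)}. z s) = 1" by simp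
  then show ?thesis using e unfolding Eg_def[of z "Suc t"] by (simp only: sum_distrib_left)
qed

definition zf :: "(nat \<Rightarrow> nat \<Rightarrow> bool) \<Rightarrow> nat \<Rightarrow> nat \<Rightarrow> nat \<times> nat \<Rightarrow> real" where
  "zf bl i s v = (if fst v = i \<and> \<not> bl (snd v) s then 0 else 1)"

lemma age_Eg: "real (age bl w i (Suc t)) = Eg (\<lambda>s. zf bl i s (w s)) (Suc t)"
proof (induction t)
  case 0 then show ?case by (simp add: Eg_one)
next
  case (Suc t)
  then show ?case by (simp add: Eg_rec zf_def)
qed

lemma RR_Eg: "RR (map q [1..<Suc t]) = Eg q (Suc t)"
proof (induction t)
  case 0 then show ?case by (simp add: Eg_one)
next
  case (Suc t)
  have "RR (map q [1..<Suc (Suc t)]) = RR (map q [1..<Suc t] @ [q (Suc t)])" by simp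
  also have "\<dots> = 1 + q (Suc t) * RR (map q [1..<Suc t])" by (simp add: RR_app algebra_simps)
  finally show ?case using Suc by (simp add: Eg_rec)
qed

lemma FF_snoc: "FF (u @ [c]) = FF u + RR (u @ [c]) - 1"
  by (simp add: FF_app RR_app algebra_simps)

lemma sum_Eg: "(\<Sum>t=1..T. Eg q t) = real T + FF (map q [1..<T])"
proof (induction T)
  case 0 then show ?case by simp
next
  case (Suc T)
  show ?case
  proof (cases T)
    case 0 then show ?thesis by (simp add: Eg_one)
  next
    case (Suc T')
    have m: "map q [1..<Suc T] = map q [1..<T] @ [q T]" using Suc by simp
    have "(\<Sum>t=1..Suc T. Eg q t) = (\<Sum>t=1..T. Eg q t) + Eg q (Suc T)" by simp
    also have "\<dots> = real T + FF (map q [1..<T]) + RR (map q [1..<Suc T])"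
      using Suc.IH RR_Eg[of q T] by simp
    also have "\<dots> = real (Suc T) + FF (map q [1..<Suc T])"
      using FF_snoc[of "map q [1..<T]" "q T"] m by simp
    finally show ?thesis .
  qed
qed

lemma indep:
  fixes f :: "nat \<Rightarrow> 'b \<Rightarrow> real"
  assumes I: "finite I" and J: "J \<subseteq> I" and S: "finite S" "S \<noteq> {}"
  shows "(\<Sum>w\<in>PiE I (\<lambda>_. S). \<Prod>s\<in>J. f s (w s)) / real (card (PiE I (\<lambda>_. S))) =
         (\<Prod>s\<in>J. (\<Sum>v\<in>S. f s v) / real (card S))"
proof -
  define g where "g s v = (if s \<in> J then f s v else 1)" for s v
  have JJ: "finite J" using I J finite_subset by blast
  have 1: "(\<Prod>s\<in>J. f s (w s)) = (\<Prod>s\<in>I. g s (w s))" for w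
  proof -
    have "(\<Prod>s\<in>I. g s (w s)) = (\<Prod>s\<in>J. g s (w s))"
      by (rule prod.mono_neutral_right[OF I J]) (auto simp: g_def)
    then show ?thesis by (simp add: g_def)
  qed
  have 2: "(\<Sum>w\<in>PiE I (\<lambda>_. S). \<Prod>s\<in>I. g s (w s)) = (\<Prod>s\<in>I. \<Sum>v\<in>S. g s v)"
    by (rule prod_sum_PiE[symmetric]) (use I S in auto)
  have 3: "real (card (PiE I (\<lambda>_. S))) = (\<Prod>s\<in>I. real (card S))"
    by (simp add: card_PiE[OF I])
  have cS: "real (card S) \<noteq> 0" using S by simp
  have "(\<Sum>w\<in>PiE I (\<lambda>_. S). \<Prod>s\<in>J. f s (w s)) / real (card (PiE I (\<lambda>_. S)))
      = (\<Prod>s\<in>I. (\<Sum>v\<in>S. g s v) / real (card S))"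
    by (simp add: 1 2 3 prod_dividef)
  also have "\<dots> = (\<Prod>s\<in>J. (\<Sum>v\<in>S. g s v) / real (card S))"
    by (rule prod.mono_neutral_right[OF I J]) (use cS in \<open>auto simp: g_def\<close>)
  also have "\<dots> = (\<Prod>s\<in>J. (\<Sum>v\<in>S. f s v) / real (card S))"
    by (rule prod.cong) (auto simp: g_def)
  finally show ?thesis .
qed

definition qv :: "nat \<Rightarrow> nat \<Rightarrow> (nat \<Rightarrow> nat \<Rightarrow> bool) \<Rightarrow> nat \<Rightarrow> real" where
  "qv N Nsub bl s = 1 - (real Nsub - real (card {j. j < Nsub \<and> bl j s})) / (real N * real Nsub)"

lemma sum_zf: assumes "i < N"
  shows "(\<Sum>v\<in>{0..<N} \<times> {0..<Nsub}. zf bl i s v) =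
     real N * real Nsub - (real Nsub - real (card {j. j < Nsub \<and> bl j s}))"
proof -
  let ?S = "{0..<N} \<times> {0..<Nsub}"
  let ?A = "{v \<in> ?S. fst v = i \<and> \<not> bl (snd v) s}"
  have "(\<Sum>v\<in>?S. zf bl i s v) = (\<Sum>v\<in>?S. 1 - (if v \<in> ?A then 1 else 0))"
    by (rule sum.cong) (auto simp: zf_def)
  also have "\<dots> = real (card ?S) - (\<Sum>v\<in>?S. (if v \<in> ?A then 1 else 0))"
    by (simp add: sum_subtractf)
  also have "(\<Sum>v\<in>?S. (if v \<in> ?A then 1 else 0::real)) = (\<Sum>v\<in>?A. 1)"
    by (rule sum.mono_neutral_cong_right) auto
  also have "(\<Sum>v\<in>?A. 1::real) = real (card ?A)" by simp
  also have "?A = {i} \<times> {j. j < Nsub \<and> \<not> bl j s}" using assms by auto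
  also have "card ({i} \<times> {j. j < Nsub \<and> \<not> bl j s}) = card {j. j < Nsub \<and> \<not> bl j s}"
    by (simp add: card_cartesian_product_singleton)
  also have "{j. j < Nsub \<and> \<not> bl j s} = {0..<Nsub} - {j. j < Nsub \<and> bl j s}" by auto
  also have "card ({0..<Nsub} - {j. j < Nsub \<and> bl j s}) = Nsub - card {j. j < Nsub \<and> bl j s}"
    by (subst card_Diff_subset) auto
  also have "real (Nsub - card {j. j < Nsub \<and> bl j s}) = real Nsub - real (card {j. j < Nsub \<and> bl j s})"
  proof -
    have "card {j. j < Nsub \<and> bl j s} \<le> card {0..<Nsub}" by (rule card_mono) auto
    then show ?thesis by simp
  qed
  finally show ?thesis by simp
qed

lemma expected_qv: assumes "i < N" "1 \<le> Nsub" "1 \<le> N" "t \<in> {1..T}"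
  shows "expected_age N Nsub T bl i t = Eg (qv N Nsub bl) t"
proof -
  let ?O = "outcomes N Nsub T"
  let ?S = "{0..<N} \<times> {0..<Nsub}"
  have O: "?O = PiE {1..T} (\<lambda>_. ?S)" by (simp add: outcomes_def)
  obtain t' where t': "t = Suc t'" using assms(4) by (cases t) auto
  have "expected_age N Nsub T bl i t = (\<Sum>w\<in>?O. Eg (\<lambda>s. zf bl i s (w s)) t) / real (card ?O)"
    unfolding expected_age_def t' by (simp add: age_Eg)
  also have "\<dots> = (\<Sum>k<t. (\<Sum>w\<in>?O. \<Prod>s\<in>{t-k..<t}. zf bl i s (w s)) / real (card ?O))"
    unfolding Eg_def by (subst sum.swap) (simp add: sum_divide_distrib)
  also have "\<dots> = (\<Sum>k<t. \<Prod>s\<in>{t-k..<t}. (\<Sum>v\<in>?S. zf bl i s v) / real (card ?S))"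
  proof (rule sum.cong[OF refl])
    fix k assume "k \<in> {..<t}"
    have "{t-k..<t} \<subseteq> {1..T}" using assms(4) \<open>k \<in> {..<t}\<close> by auto
    then show "(\<Sum>w\<in>?O. \<Prod>s\<in>{t-k..<t}. zf bl i s (w s)) / real (card ?O) =
        (\<Prod>s\<in>{t-k..<t}. (\<Sum>v\<in>?S. zf bl i s v) / real (card ?S))"
      unfolding O using assms by (intro indep) auto
  qed
  also have "\<dots> = Eg (qv N Nsub bl) t"
    unfolding Eg_def qv_def using assms
    by (simp add: sum_zf field_simps)
  finally show ?thesis .
qed

lemma avg_FF: assumes "1 \<le> Nsub" "1 \<le> N" "1 \<le> T"
  shows "avg_age N Nsub T bl = 1 + FF (map (qv N Nsub bl) [1..<T]) / real T"
proof -
  have "avg_age N Nsub T bl = (1 / real T) * (\<Sum>t=1..T. (1 / real N) * (\<Sum>i<N. Eg (qv N Nsub bl) t))"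
    unfolding avg_age_def
    by (intro arg_cong[where f="\<lambda>x. (1 / real T) * x"] sum.cong refl arg_cong[where f="\<lambda>x. (1 / real N) * x"])
       (use assms in \<open>auto simp: expected_qv\<close>)
  also have "\<dots> = (1 / real T) * (\<Sum>t=1..T. Eg (qv N Nsub bl) t)"
    using assms by simp
  also have "\<dots> = 1 + FF (map (qv N Nsub bl) [1..<T]) / real T"
    using assms sum_Eg[of "qv N Nsub bl" T] by (simp add: field_simps)
  finally show ?thesis .
qed



lemma FF_mono: "list_all2 (\<lambda>a b. 0 \<le> a \<and> a \<le> b) u v \<Longrightarrow> 1 \<le> LL u \<and> LL u \<le> LL v \<and> FF u \<le> FF v"
proof (induction rule: list_all2_induct)
  case Nil then show ?case by simp
next
  case (Cons a u b v)
  have "a * LL u \<le> b * LL v" using Cons by (intro mult_mono) auto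
  moreover have "0 \<le> a * LL u" using Cons by simp
  ultimately show ?case using Cons by simp
qed

lemma vals_mono: assumes "0 \<le> x" "x \<le> y" "length bs = length cs" "\<forall>i<length bs. bs ! i \<longrightarrow> cs ! i"
  shows "FF (vals x y bs) \<le> FF (vals x y cs)"
proof -
  have "list_all2 (\<lambda>a b. 0 \<le> a \<and> a \<le> b) (vals x y bs) (vals x y cs)"
    using assms by (auto simp: list_all2_conv_all_nth vals_def)
  then show ?thesis using FF_mono by blast
qed

lemma qv_val: assumes "card {j. j < Nsub \<and> bl j s} \<le> 1" "1 \<le> N" "1 \<le> Nsub"
  shows "qv N Nsub bl s = (if card {j. j < Nsub \<and> bl j s} = 1
     then 1 - (real Nsub - 1) / (real N * real Nsub) else 1 - 1 / real N)"
proof (cases "card {j. j < Nsub \<and> bl j s} = 1")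
  case True then show ?thesis by (simp add: qv_def)
next
  case False
  obtain c where c: "card {j. j < Nsub \<and> bl j s} = c" by blast
  then have "c = 0" using assms(1) False by simp
  show ?thesis unfolding qv_def c using \<open>c = 0\<close> assms by simp
qed

lemma len_filter_upt: "length (filter P [1..<T]) = card {s \<in> {1..<T}. P s}"
proof -
  have "set (filter P [1..<T]) = {s \<in> {1..<T}. P s}" by auto
  moreover have "distinct (filter P [1..<T])" by simp
  ultimately show ?thesis by (metis distinct_card)
qed

theorem theorem8:
  fixes N Nsub T :: nat and \<alpha> :: real
  assumes "N \<ge> 1" and "Nsub \<ge> 2" and "T \<ge> 1"
    and "0 < \<alpha>" and "\<alpha> < 1" and "\<alpha> * real T \<in> \<int>"
  shows "\<exists>bl. feasible Nsub T \<alpha> bl \<and>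
           (\<forall>bl'. feasible Nsub T \<alpha> bl' \<longrightarrow> avg_age N Nsub T bl' \<le> avg_age N Nsub T bl) \<and>
           (\<exists>j t0 K. j < Nsub \<and> real K = \<alpha> * real T \<and> 1 \<le> t0 \<and> t0 + K \<le> T + 1 \<and>
              (\<forall>j'<Nsub. \<forall>t\<in>{1..T}. bl j' t \<longleftrightarrow> (j' = j \<and> t0 \<le> t \<and> t < t0 + K)))"
proof -
  have N1: "1 \<le> N" and Ns1: "1 \<le> Nsub" and T1: "1 \<le> T" using assms by auto
  obtain k :: int where k: "\<alpha> * real T = of_int k" using assms(6) Ints_cases by metis
  define K where "K = nat k"
  have kpos: "0 < k" using k assms(3,4)
    by (metis of_int_0_less_iff of_nat_0_less_iff mult_pos_pos less_le_trans zero_less_one of_nat_1 of_nat_le_iff)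
  have K: "real K = \<alpha> * real T" using k kpos by (simp add: K_def)
  have "\<alpha> * real T < real T" using assms(3,5) by simp
  then have KT: "K < T" using K by linarith
  define n where "n = T - 1"
  have Kn: "K \<le> n" using KT by (simp add: n_def)
  define x :: real where "x = 1 - 1 / real N"
  define y :: real where "y = 1 - (real Nsub - 1) / (real N * real Nsub)"
  have x0: "0 \<le> x" using N1 by (simp add: x_def)
  have xy: "x \<le> y"
  proof -
    have "(real Nsub - 1) / (real N * real Nsub) \<le> real Nsub / (real N * real Nsub)"
      using N1 Ns1 by (intro divide_right_mono) auto
    also have "\<dots> = 1 / real N" using Ns1 by simp
    finally show ?thesis by (simp add: x_def y_def)
  qed
  define fb where "fb a = FF (vals x y (blk n a K))" for a
  define M where "M = Max (fb ` {0..n-K})"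
  have "M \<in> fb ` {0..n-K}" unfolding M_def by (rule Max_in) auto
  then obtain a where a: "a \<le> n - K" "fb a = M" by auto
  have amax: "fb a' \<le> fb a" if "a' \<le> n - K" for a'
  proof -
    have "fb a' \<le> M" unfolding M_def by (rule Max_ge) (use that in auto)
    then show ?thesis using a(2) by simp
  qed
  define bl where "bl (j::nat) (t::nat) = (j = 0 \<and> a + 1 \<le> t \<and> t < a + 1 + K)" for j t
  have Cbl: "{j. j < Nsub \<and> bl j s} = (if a + 1 \<le> s \<and> s < a + 1 + K then {0} else {})" for s
    using Ns1 by (auto simp: bl_def)
  have qbl: "map (qv N Nsub bl) [1..<T] = vals x y (blk n a K)"
  proof (rule nth_equalityI)
    show "length (map (qv N Nsub bl) [1..<T]) = length (vals x y (blk n a K))"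
      by (simp add: vals_def n_def)
  next
    fix i assume "i < length (map (qv N Nsub bl) [1..<T])"
    then have i: "i < n" by (simp add: n_def)
    have "qv N Nsub bl (Suc i) = (if a \<le> i \<and> i < a + K then y else x)"
      using qv_val[of Nsub bl "Suc i" N] Cbl[of "Suc i"] N1 Ns1 by (simp add: x_def y_def)
    then show "map (qv N Nsub bl) [1..<T] ! i = vals x y (blk n a K) ! i"
      using i by (simp add: vals_def blk_def n_def)
  qed
  have feas: "feasible Nsub T \<alpha> bl"
  proof -
    have "{(j, t). j < Nsub \<and> t \<in> {1..T} \<and> bl j t} = (\<lambda>t. (0, t)) ` {a+1..<a+1+K}"
      using Ns1 a(1) Kn by (auto simp: bl_def n_def)
    then have "card {(j, t). j < Nsub \<and> t \<in> {1..T} \<and> bl j t} = K"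
      by (simp add: card_image inj_on_def)
    moreover have "card {j. j < Nsub \<and> bl j t} \<le> 1" for t
      using Cbl[of t] by simp
    ultimately show ?thesis unfolding feasible_def using K by simp
  qed
  have opt: "avg_age N Nsub T bl' \<le> avg_age N Nsub T bl" if f: "feasible Nsub T \<alpha> bl'" for bl'
  proof -
    define C where "C s = card {j. j < Nsub \<and> bl' j s}" for s
    have C1: "C s \<le> 1" if "s \<in> {1..T}" for s using f that by (simp add: feasible_def C_def)
    define bs where "bs = map (\<lambda>s. C s = 1) [1..<T]"
    have qbs: "map (qv N Nsub bl') [1..<T] = vals x y bs"
      unfolding bs_def vals_def
      using qv_val[OF C1[unfolded C_def] N1 Ns1] by (auto simp: x_def y_def C_def)
    have lbs: "length bs = n" by (simp add: bs_def n_def)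
    define m where "m = length (filter id bs)"
    have "m = length (filter (\<lambda>s. C s = 1) [1..<T])"
      by (simp add: m_def bs_def filter_map comp_def)
    also have "\<dots> = card {s \<in> {1..<T}. C s = 1}" by (rule len_filter_upt)
    also have "\<dots> \<le> card {(j, t). j < Nsub \<and> t \<in> {1..T} \<and> bl' j t}"
    proof (rule card_inj_on_le)
      let ?f = "\<lambda>s. (SOME j. j < Nsub \<and> bl' j s, s)"
      show "inj_on ?f {s \<in> {1..<T}. C s = 1}" by (auto simp: inj_on_def)
      show "?f ` {s \<in> {1..<T}. C s = 1} \<subseteq> {(j, t). j < Nsub \<and> t \<in> {1..T} \<and> bl' j t}"
      proof
        fix p assume "p \<in> ?f ` {s \<in> {1..<T}. C s = 1}"
        then obtain s where s: "s \<in> {1..<T}" "C s = 1" "p = ?f s" by auto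
        then have "{j. j < Nsub \<and> bl' j s} \<noteq> {}" unfolding C_def by (metis card.empty zero_neq_one)
        then have "\<exists>j. j < Nsub \<and> bl' j s" by auto
        then have "(SOME j. j < Nsub \<and> bl' j s) < Nsub \<and> bl' (SOME j. j < Nsub \<and> bl' j s) s"
          by (rule someI_ex)
        then show "p \<in> {(j, t). j < Nsub \<and> t \<in> {1..T} \<and> bl' j t}" using s by auto
      qed
      show "finite {(j, t). j < Nsub \<and> t \<in> {1..T} \<and> bl' j t}"
        by (rule finite_subset[of _ "{0..<Nsub} \<times> {1..T}"]) auto
    qed
    finally have "real m \<le> real K" using f K by (simp add: feasible_def)
    then have mK: "m \<le> K" by simp
    obtain a0 where a0: "a0 + m \<le> n" "FF (vals x y bs) \<le> FF (vals x y (blk n a0 m))"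
      using lemmaB[OF x0 xy, of bs] lbs m_def by auto
    define a1 where "a1 = min a0 (n - K)"
    have "FF (vals x y (blk n a0 m)) \<le> FF (vals x y (blk n a1 K))"
      by (rule vals_mono[OF x0 xy]) (use a0 mK Kn in \<open>auto simp: blk_def a1_def\<close>)
    also have "\<dots> \<le> fb a" using amax[of a1] by (simp add: a1_def fb_def)
    finally have "FF (map (qv N Nsub bl') [1..<T]) \<le> FF (map (qv N Nsub bl) [1..<T])"
      using a0 qbs qbl fb_def by simp
    then show ?thesis using avg_FF[OF Ns1 N1 T1] T1 by (simp add: divide_right_mono)
  qed
  have ex: "\<exists>j t0 K'. j < Nsub \<and> real K' = \<alpha> * real T \<and> 1 \<le> t0 \<and> t0 + K' \<le> T + 1 \<and>
              (\<forall>j'<Nsub. \<forall>t\<in>{1..T}. bl j' t \<longleftrightarrow> (j' = j \<and> t0 \<le> t \<and> t < t0 + K'))"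
    by (rule exI[of _ 0], rule exI[of _ "a+1"], rule exI[of _ K])
       (use Ns1 K a(1) Kn in \<open>auto simp: bl_def n_def\<close>)
  show ?thesis using feas opt ex by blast
qed

end
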